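(* Let $X$ and $Y$ be sets and let $A=(a_{y,x})_{(y,x)\in Y\times X}$ be a sparse-sparse operator. The following are equivalent: (i) $A$ is absolutely uniformly bounded; (ii) $A$ is bounded in $\ell^p$ for some $1\leq p\leq\infty$; (iii) $A$ has bounded coefficients, i.e. $\sup_{y,x}|a_{y,x}|<\infty$.
   Context: $A$ is sparse-sparse if there is $v<\infty$ such that the support of every row $(a_{y,x})_{x\in X}$ and of every column $(a_{y,x})_{y\in Y}$ has cardinality at most $v$. Writing $|A|=(|a_{y,x}|)$, $A$ is absolutely uniformly bounded if $\sup_{1\leq p\leq\infty}\||A|\|_{p\to p}<\infty$. *)

theory Defs
  imports "HOL-Analysis.Analysis"
begin

definition sparse_sparse :: "('y \<Rightarrow> 'x \<Rightarrow> 'k::zero) \<Rightarrow> bool" where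
  "sparse_sparse A \<longleftrightarrow> (\<exists>v::nat.
      (\<forall>y. finite {x. A y x \<noteq> 0} \<and> card {x. A y x \<noteq> 0} \<le> v) \<and>
      (\<forall>x. finite {y. A y x \<noteq> 0} \<and> card {y. A y x \<noteq> 0} \<le> v))"

text \<open>Action of the matrix on a function on X (finite row sums for sparse-sparse matrices).\<close>
definition mat_apply :: "('y \<Rightarrow> 'x \<Rightarrow> 'k::real_normed_field) \<Rightarrow> ('x \<Rightarrow> 'k) \<Rightarrow> 'y \<Rightarrow> 'k" where
  "mat_apply A f y = (\<Sum>x\<in>{x. A y x \<noteq> 0}. A y x * f x)"

definition in_lp :: "ereal \<Rightarrow> ('x \<Rightarrow> 'k::real_normed_vector) \<Rightarrow> bool" where
  "in_lp p f \<longleftrightarrow> (if p = \<infinity> then bdd_above (range (\<lambda>x. norm (f x)))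
     else (\<lambda>x. norm (f x) powr real_of_ereal p) summable_on UNIV)"

definition lp_norm :: "ereal \<Rightarrow> ('x \<Rightarrow> 'k::real_normed_vector) \<Rightarrow> real" where
  "lp_norm p f = (if p = \<infinity> then (SUP x. norm (f x))
     else (infsum (\<lambda>x. norm (f x) powr real_of_ereal p) UNIV) powr (1 / real_of_ereal p))"

definition lp_bound :: "ereal \<Rightarrow> ('y \<Rightarrow> 'x \<Rightarrow> 'k::real_normed_field) \<Rightarrow> real \<Rightarrow> bool" where
  "lp_bound p A C \<longleftrightarrow> (\<forall>f. in_lp p f \<longrightarrow>
      in_lp p (mat_apply A f) \<and> lp_norm p (mat_apply A f) \<le> C * lp_norm p f)"

text \<open>Operator norm on \<ell>^p (value \<infinity> if unbounded).\<close>
definition lp_opnorm :: "ereal \<Rightarrow> ('y \<Rightarrow> 'x \<Rightarrow> 'k::real_normed_field) \<Rightarrow> ereal" where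
  "lp_opnorm p A = Inf {ereal C | C. 0 \<le> C \<and> lp_bound p A C}"

definition abs_mat :: "('y \<Rightarrow> 'x \<Rightarrow> 'k::real_normed_field) \<Rightarrow> 'y \<Rightarrow> 'x \<Rightarrow> real" where
  "abs_mat A = (\<lambda>y x. norm (A y x))"

definition abs_unif_bounded :: "('y \<Rightarrow> 'x \<Rightarrow> 'k::real_normed_field) \<Rightarrow> bool" where
  "abs_unif_bounded A \<longleftrightarrow> (SUP p\<in>{1..\<infinity>}. lp_opnorm p (abs_mat A)) < \<infinity>"

definition bounded_coeffs :: "('y \<Rightarrow> 'x \<Rightarrow> 'k::real_normed_field) \<Rightarrow> bool" where
  "bounded_coeffs A \<longleftrightarrow> (SUP yx. ereal (norm (A (fst yx) (snd yx)))) < \<infinity>"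

end

theory Submission
  imports Defs
begin

lemma sum_le_infsum_nn:
  fixes a :: "'a \<Rightarrow> real"
  assumes "a summable_on UNIV" "\<And>x. a x \<ge> 0" "finite F"
  shows "sum a F \<le> infsum a UNIV"
proof -
  have "infsum a F \<le> infsum a UNIV"
    by (rule infsum_mono_neutral) (use assms in auto)
  then show ?thesis using assms by simp
qed

lemma lp_bound_real:
  fixes A :: "'y \<Rightarrow> 'x \<Rightarrow> 'k::real_normed_field"
  assumes rows: "\<And>y. finite {x. A y x \<noteq> 0} \<and> card {x. A y x \<noteq> 0} \<le> v"
    and cols: "\<And>x. finite {y. A y x \<noteq> 0} \<and> card {y. A y x \<noteq> 0} \<le> v"
    and M: "\<And>y x. norm (A y x) \<le> M" "M \<ge> 0"
    and q: "q \<ge> 1"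
  shows "lp_bound (ereal q) A (M * max (real v) 1 * max (real v) 1)"
  unfolding lp_bound_def
proof (intro allI impI)
  fix f :: "'x \<Rightarrow> 'k"
  define w where "w = max (real v) 1"
  have w1: "w \<ge> 1" and wv: "real v \<le> w" by (auto simp: w_def)
  assume "in_lp (ereal q) f"
  then have sa: "(\<lambda>x. norm (f x) powr q) summable_on UNIV" by (simp add: in_lp_def)
  define a where "a = (\<lambda>x. norm (f x) powr q)"
  define T where "T = infsum a UNIV"
  have a0: "a x \<ge> 0" for x by (simp add: a_def)
  have saa: "a summable_on UNIV" using sa by (simp add: a_def)
  have T0: "T \<ge> 0" unfolding T_def by (rule infsum_nonneg) (simp add: a0)
  define g where "g = mat_apply A f"
  define S where "S y = {x. A y x \<noteq> 0}" for y
  have finS: "finite (S y)" for y using rows by (simp add: S_def)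
  have cardS: "real (card (S y)) \<le> w" for y using rows[of y] wv by (simp add: S_def)
  have step1: "norm (g y) powr q \<le> (M * w) powr q * (\<Sum>x\<in>S y. a x)" for y
  proof (cases "S y = {}")
    case True
    then have "g y = 0" by (simp add: g_def mat_apply_def S_def)
    moreover have "0 \<le> (M * w) powr q * (\<Sum>x\<in>S y. a x)"
      by (intro mult_nonneg_nonneg sum_nonneg) (auto simp: a0)
    ultimately show ?thesis using q by simp
  next
    case False
    define m where "m = Max ((\<lambda>x. norm (f x)) ` S y)"
    have "m \<in> (\<lambda>x. norm (f x)) ` S y" unfolding m_def
      using False finS by (intro Max_in) auto
    then obtain x0 where x0: "x0 \<in> S y" "m = norm (f x0)" by auto
    have mle: "norm (f x) \<le> m" if "x \<in> S y" for x
      unfolding m_def using finS that by (intro Max_ge) auto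
    have "norm (g y) \<le> (\<Sum>x\<in>S y. norm (A y x * f x))"
      unfolding g_def mat_apply_def S_def by (rule norm_sum)
    also have "\<dots> \<le> (\<Sum>x\<in>S y. M * m)"
      by (intro sum_mono) (auto simp: norm_mult intro!: mult_mono M mle)
    also have "\<dots> = real (card (S y)) * (M * m)" by simp
    also have "\<dots> \<le> w * (M * m)"
      using cardS M(2) x0 by (intro mult_right_mono) auto
    finally have ng: "norm (g y) \<le> (M * w) * norm (f x0)" using x0 by (simp add: algebra_simps)
    have "norm (g y) powr q \<le> ((M * w) * norm (f x0)) powr q"
      using ng q by (intro powr_mono2) auto
    also have "\<dots> = (M * w) powr q * a x0"
      using M(2) w1 by (simp add: a_def powr_mult)
    also have "\<dots> \<le> (M * w) powr q * (\<Sum>x\<in>S y. a x)"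
      using x0 finS a0 by (intro mult_left_mono member_le_sum) auto
    finally show ?thesis .
  qed
  have step2: "(\<Sum>y\<in>F. \<Sum>x\<in>S y. a x) \<le> w * T" if F: "finite F" for F
  proof -
    define U where "U = (\<Union>y\<in>F. S y)"
    have finU: "finite U" using F finS by (simp add: U_def)
    have "(\<Sum>y\<in>F. \<Sum>x\<in>S y. a x) = (\<Sum>y\<in>F. \<Sum>x\<in>U. if A y x \<noteq> 0 then a x else 0)"
    proof (rule sum.cong[OF refl])
      fix y assume "y \<in> F"
      then have "S y \<subseteq> U" by (auto simp: U_def)
      then have "S y = {x\<in>U. A y x \<noteq> 0}" by (auto simp: S_def)
      then show "(\<Sum>x\<in>S y. a x) = (\<Sum>x\<in>U. if A y x \<noteq> 0 then a x else 0)"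
        using finU by (simp add: sum.inter_filter)
    qed
    also have "\<dots> = (\<Sum>x\<in>U. \<Sum>y\<in>F. if A y x \<noteq> 0 then a x else 0)"
      by (rule sum.swap)
    also have "\<dots> \<le> (\<Sum>x\<in>U. w * a x)"
    proof (intro sum_mono)
      fix x
      have "(\<Sum>y\<in>F. if A y x \<noteq> 0 then a x else 0) = (\<Sum>y\<in>{y\<in>F. A y x \<noteq> 0}. a x)"
        using F sum.inter_filter[of F "\<lambda>_. a x" "\<lambda>y. A y x \<noteq> 0"] by simp
      also have "\<dots> = real (card {y\<in>F. A y x \<noteq> 0}) * a x" by simp
      also have "\<dots> \<le> w * a x"
      proof (intro mult_right_mono a0)
        have "card {y\<in>F. A y x \<noteq> 0} \<le> card {y. A y x \<noteq> 0}"
          using cols[of x] by (intro card_mono) auto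
        then show "real (card {y\<in>F. A y x \<noteq> 0}) \<le> w" using cols[of x] wv by linarith
      qed
      finally show "(\<Sum>y\<in>F. if A y x \<noteq> 0 then a x else 0) \<le> w * a x" .
    qed
    also have "\<dots> = w * (\<Sum>x\<in>U. a x)" by (simp add: sum_distrib_left)
    also have "\<dots> \<le> w * T"
      unfolding T_def using w1 by (intro mult_left_mono sum_le_infsum_nn saa a0 finU) auto
    finally show ?thesis .
  qed
  define K where "K = (M * w) powr q * (w * T)"
  have finsum: "(\<Sum>y\<in>F. norm (g y) powr q) \<le> K" if "finite F" for F
  proof -
    have "(\<Sum>y\<in>F. norm (g y) powr q) \<le> (\<Sum>y\<in>F. (M * w) powr q * (\<Sum>x\<in>S y. a x))"
      by (intro sum_mono step1)
    also have "\<dots> = (M * w) powr q * (\<Sum>y\<in>F. \<Sum>x\<in>S y. a x)" by (simp add: sum_distrib_left)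
    also have "\<dots> \<le> K" unfolding K_def using step2[OF that] by (intro mult_left_mono) auto
    finally show ?thesis .
  qed
  have sg: "(\<lambda>y. norm (g y) powr q) summable_on UNIV"
    by (rule nonneg_bdd_above_summable_on) (auto intro!: bdd_aboveI[where M=K] finsum)
  have isg: "infsum (\<lambda>y. norm (g y) powr q) UNIV \<le> K"
    by (rule infsum_le_finite_sums[OF sg]) (rule finsum)
  have isg0: "infsum (\<lambda>y. norm (g y) powr q) UNIV \<ge> 0" by (rule infsum_nonneg) simp
  have "lp_norm (ereal q) g = (infsum (\<lambda>y. norm (g y) powr q) UNIV) powr (1/q)"
    by (simp add: lp_norm_def)
  also have "\<dots> \<le> K powr (1/q)" using isg isg0 q by (intro powr_mono2) auto
  also have "K powr (1/q) = (M * w) * w powr (1/q) * T powr (1/q)"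
  proof -
    have "K powr (1/q) = ((M * w) powr q) powr (1/q) * w powr (1/q) * T powr (1/q)"
      unfolding K_def using M(2) w1 T0 by (simp add: powr_mult)
    also have "((M * w) powr q) powr (1/q) = M * w"
      using M(2) w1 q by (simp add: powr_powr)
    finally show ?thesis .
  qed
  also have "\<dots> \<le> (M * w) * w * T powr (1/q)"
  proof -
    have "w powr (1/q) \<le> w powr 1" using w1 q by (intro powr_mono) auto
    then show ?thesis using w1 M(2) by (intro mult_right_mono mult_left_mono) auto
  qed
  also have "T powr (1/q) = lp_norm (ereal q) f"
    by (simp add: lp_norm_def T_def a_def)
  finally have "lp_norm (ereal q) g \<le> M * w * w * lp_norm (ereal q) f" .
  then show "in_lp (ereal q) (mat_apply A f) \<and>
    lp_norm (ereal q) (mat_apply A f) \<le> M * max (real v) 1 * max (real v) 1 * lp_norm (ereal q) f"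
    using sg by (simp add: in_lp_def g_def w_def)
qed


lemma lp_bound_inf:
  fixes A :: "'y \<Rightarrow> 'x \<Rightarrow> 'k::real_normed_field"
  assumes rows: "\<And>y. finite {x. A y x \<noteq> 0} \<and> card {x. A y x \<noteq> 0} \<le> v"
    and M: "\<And>y x. norm (A y x) \<le> M" "M \<ge> 0"
  shows "lp_bound \<infinity> A (M * max (real v) 1 * max (real v) 1)"
  unfolding lp_bound_def
proof (intro allI impI)
  fix f :: "'x \<Rightarrow> 'k"
  define w where "w = max (real v) 1"
  have w1: "w \<ge> 1" and wv: "real v \<le> w" by (auto simp: w_def)
  assume "in_lp \<infinity> f"
  then have bf: "bdd_above (range (\<lambda>x. norm (f x)))" by (simp add: in_lp_def)
  define B where "B = (SUP x. norm (f x))"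
  have fB: "norm (f x) \<le> B" for x unfolding B_def by (rule cSUP_upper[OF _ bf]) simp
  have B0: "B \<ge> 0" using fB[of undefined] norm_ge_zero order_trans by blast
  define g where "g = mat_apply A f"
  define S where "S y = {x. A y x \<noteq> 0}" for y
  have cardS: "real (card (S y)) \<le> w" for y using rows[of y] wv by (simp add: S_def)
  have gb: "norm (g y) \<le> M * w * w * B" for y
  proof -
    have "norm (g y) \<le> (\<Sum>x\<in>S y. norm (A y x * f x))"
      unfolding g_def mat_apply_def S_def by (rule norm_sum)
    also have "\<dots> \<le> (\<Sum>x\<in>S y. M * B)"
      by (intro sum_mono) (auto simp: norm_mult intro!: mult_mono M fB)
    also have "\<dots> = real (card (S y)) * (M * B)" by simp
    also have "\<dots> \<le> w * (M * B)"
      using cardS M(2) B0 by (intro mult_right_mono) auto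
    also have "\<dots> \<le> w * w * (M * B)"
      using w1 M(2) B0 by (intro mult_right_mono) auto
    finally show ?thesis by (simp add: algebra_simps)
  qed
  have bg: "bdd_above (range (\<lambda>y. norm (g y)))" using gb by (auto intro!: bdd_aboveI)
  have "lp_norm \<infinity> g \<le> M * w * w * B"
    unfolding lp_norm_def by simp (rule cSUP_least, auto intro: gb)
  then show "in_lp \<infinity> (mat_apply A f) \<and>
    lp_norm \<infinity> (mat_apply A f) \<le> M * max (real v) 1 * max (real v) 1 * lp_norm \<infinity> f"
    using bg by (simp add: in_lp_def g_def w_def lp_norm_def B_def)
qed

lemma coeff_bound:
  fixes A :: "'y \<Rightarrow> 'x \<Rightarrow> 'k::real_normed_field"
  assumes rows: "\<And>y. finite {x. A y x \<noteq> 0}"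
    and lb: "lp_bound p A C" and p: "1 \<le> p"
  shows "norm (A y x) \<le> C"
proof -
  define d :: "'x \<Rightarrow> 'k" where "d = (\<lambda>x'. if x' = x then 1 else 0)"
  have gd: "mat_apply A d y = A y x"
  proof (cases "A y x = 0")
    case True
    then show ?thesis unfolding mat_apply_def d_def
      by (auto intro!: sum.neutral)
  next
    case False
    have "mat_apply A d y = (\<Sum>x'\<in>{x. A y x \<noteq> 0}. if x' = x then A y x' else 0)"
      unfolding mat_apply_def d_def by (intro sum.cong) auto
    also have "\<dots> = A y x" using False rows[of y] by (simp add: sum.delta')
    finally show ?thesis .
  qed
  define g where "g = mat_apply A d"
  show ?thesis
  proof (cases p)
    case PInf
    have bd: "bdd_above (range (\<lambda>x'. norm (d x')))"
      by (auto intro!: bdd_aboveI[where M=1] simp: d_def)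
    have nd: "lp_norm \<infinity> d = 1"
      unfolding lp_norm_def
    proof simp
      show "(SUP x'. norm (d x')) = 1"
      proof (rule antisym)
        show "(SUP x'. norm (d x')) \<le> 1" by (rule cSUP_least) (auto simp: d_def)
        have "norm (d x) \<le> (SUP x'. norm (d x'))" by (rule cSUP_upper[OF _ bd]) simp
        then show "1 \<le> (SUP x'. norm (d x'))" by (simp add: d_def)
      qed
    qed
    have "in_lp \<infinity> g \<and> lp_norm \<infinity> g \<le> C * lp_norm \<infinity> d"
      using lb bd unfolding lp_bound_def g_def by (simp add: in_lp_def PInf)
    then have bg: "bdd_above (range (\<lambda>y. norm (g y)))" and le: "lp_norm \<infinity> g \<le> C"
      using nd by (auto simp: in_lp_def)
    have "norm (g y) \<le> lp_norm \<infinity> g" unfolding lp_norm_def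
      by simp (rule cSUP_upper[OF _ bg], simp)
    then show ?thesis using le gd g_def by simp
  next
    case (real q)
    then have q: "q \<ge> 1" using p by simp
    have dp: "(\<lambda>x'. norm (d x') powr q) = (\<lambda>x'. if x' = x then 1 else 0)"
      using q by (auto simp: d_def)
    have sd: "(\<lambda>x'. norm (d x') powr q) summable_on UNIV"
    proof -
      have "(\<lambda>x'. if x' = x then (1::real) else 0) summable_on UNIV \<longleftrightarrow>
            (\<lambda>x'. if x' = x then (1::real) else 0) summable_on {x}"
        by (rule summable_on_cong_neutral) auto
      then show ?thesis unfolding dp by simp
    qed
    have "infsum (\<lambda>x'. norm (d x') powr q) UNIV = infsum (\<lambda>x'. if x' = x then 1 else 0) {x}"
      unfolding dp by (rule infsum_cong_neutral) auto
    then have nd: "lp_norm (ereal q) d = 1" by (simp add: lp_norm_def)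
    have "in_lp (ereal q) g \<and> lp_norm (ereal q) g \<le> C * lp_norm (ereal q) d"
      using lb sd unfolding lp_bound_def g_def real by (simp add: in_lp_def)
    then have sg: "(\<lambda>y. norm (g y) powr q) summable_on UNIV" and le: "lp_norm (ereal q) g \<le> C"
      using nd by (auto simp: in_lp_def)
    have "norm (g y) powr q \<le> infsum (\<lambda>y. norm (g y) powr q) UNIV"
      using sum_le_infsum_nn[OF sg, of "{y}"] by simp
    then have "(norm (g y) powr q) powr (1/q) \<le> (infsum (\<lambda>y. norm (g y) powr q) UNIV) powr (1/q)"
      using q by (intro powr_mono2) auto
    also have "(norm (g y) powr q) powr (1/q) = norm (g y)" using q by (simp add: powr_powr)
    finally have "norm (g y) \<le> lp_norm (ereal q) g" by (simp add: lp_norm_def)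
    then show ?thesis using le gd g_def by simp
  next
    case MInf then show ?thesis using p by simp
  qed
qed


lemma opnorm_finite_coeffs:
  fixes A :: "'y \<Rightarrow> 'x \<Rightarrow> 'k::real_normed_field"
  assumes rows: "\<And>y. finite {x. A y x \<noteq> 0}" and p: "1 \<le> p"
    and fin: "lp_opnorm p A < \<infinity>"
  shows "bounded_coeffs A"
proof -
  have "\<exists>e\<in>{ereal C | C. 0 \<le> C \<and> lp_bound p A C}. e < \<infinity>"
    using fin unfolding lp_opnorm_def Inf_less_iff .
  then obtain C where C: "lp_bound p A C" by blast
  have "(SUP yx. ereal (norm (A (fst yx) (snd yx)))) \<le> ereal C"
    by (rule SUP_least) (simp add: coeff_bound[OF rows C p])
  then show ?thesis unfolding bounded_coeffs_def by (rule le_less_trans) simp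
qed

lemma coeffs_bound:
  fixes A :: "'y \<Rightarrow> 'x \<Rightarrow> 'k::real_normed_field"
  assumes "bounded_coeffs A"
  shows "\<exists>M\<ge>0. \<forall>y x. norm (A y x) \<le> M"
proof -
  define S where "S = (SUP yx. ereal (norm (A (fst yx) (snd yx))))"
  have up: "ereal (norm (A y x)) \<le> S" for y x
    unfolding S_def by (rule SUP_upper2[where i="(y,x)"]) auto
  have S0: "S \<ge> 0" by (rule order_trans[OF _ up[of undefined undefined]]) simp
  have Sf: "S < \<infinity>" using assms by (simp add: bounded_coeffs_def S_def)
  then obtain M where SM: "S = ereal M" using S0 by (cases S) auto
  have "M \<ge> 0" using S0 SM by simp
  moreover have "norm (A y x) \<le> M" for y x using up[of y x] SM by simp
  ultimately show ?thesis by blast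
qed

lemma opnorm_le:
  fixes A :: "'y \<Rightarrow> 'x \<Rightarrow> 'k::real_normed_field"
  assumes rows: "\<And>y. finite {x. A y x \<noteq> 0} \<and> card {x. A y x \<noteq> 0} \<le> v"
    and cols: "\<And>x. finite {y. A y x \<noteq> 0} \<and> card {y. A y x \<noteq> 0} \<le> v"
    and M: "\<And>y x. norm (A y x) \<le> M" "M \<ge> 0"
    and p: "1 \<le> p"
  shows "lp_opnorm p A \<le> ereal (M * max (real v) 1 * max (real v) 1)"
proof -
  have lb: "lp_bound p A (M * max (real v) 1 * max (real v) 1)"
  proof (cases p)
    case (real q)
    then show ?thesis using lp_bound_real[OF rows cols M, of q] p by simp
  next
    case PInf
    then show ?thesis using lp_bound_inf[OF rows M] by simp
  next
    case MInf then show ?thesis using p by simp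
  qed
  have C0: "0 \<le> M * max (real v) 1 * max (real v) 1" using M(2) by simp
  show ?thesis unfolding lp_opnorm_def
    by (rule Inf_lower) (use lb C0 in blast)
qed

theorem proposition3p3:
  fixes A :: "'y \<Rightarrow> 'x \<Rightarrow> 'k::real_normed_field"
  assumes "sparse_sparse A"
  shows "(abs_unif_bounded A \<longleftrightarrow> (\<exists>p::ereal. 1 \<le> p \<and> lp_opnorm p A < \<infinity>))
       \<and> ((\<exists>p::ereal. 1 \<le> p \<and> lp_opnorm p A < \<infinity>) \<longleftrightarrow> bounded_coeffs A)"
proof -
  obtain v where rows: "\<And>y. finite {x. A y x \<noteq> 0} \<and> card {x. A y x \<noteq> 0} \<le> v"
    and cols: "\<And>x. finite {y. A y x \<noteq> 0} \<and> card {y. A y x \<noteq> 0} \<le> v"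
    using assms unfolding sparse_sparse_def by blast
  have e1: "{x. abs_mat A y x \<noteq> 0} = {x. A y x \<noteq> 0}" for y by (auto simp: abs_mat_def)
  have e2: "{y. abs_mat A y x \<noteq> 0} = {y. A y x \<noteq> 0}" for x by (auto simp: abs_mat_def)
  have rows': "\<And>y. finite {x. abs_mat A y x \<noteq> 0} \<and> card {x. abs_mat A y x \<noteq> 0} \<le> v"
    using rows e1 by simp
  have cols': "\<And>x. finite {y. abs_mat A y x \<noteq> 0} \<and> card {y. abs_mat A y x \<noteq> 0} \<le> v"
    using cols e2 by simp
  define w where "w = max (real v) 1"
  have iii_i: "abs_unif_bounded A" if bc: "bounded_coeffs A"
  proof -
    obtain M where M: "M \<ge> 0" "\<And>y x. norm (A y x) \<le> M" using coeffs_bound[OF bc] by blast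
    have M': "norm (abs_mat A y x) \<le> M" for y x using M by (simp add: abs_mat_def)
    have "(SUP p\<in>{1..\<infinity>}. lp_opnorm p (abs_mat A)) \<le> ereal (M * w * w)"
    proof (rule SUP_least)
      fix p :: ereal assume "p \<in> {1..\<infinity>}"
      then have "1 \<le> p" by simp
      then show "lp_opnorm p (abs_mat A) \<le> ereal (M * w * w)"
        unfolding w_def by (rule opnorm_le[OF rows' cols' M' M(1)])
    qed
    then show ?thesis unfolding abs_unif_bounded_def by (rule le_less_trans) simp
  qed
  have iii_ii: "\<exists>p::ereal. 1 \<le> p \<and> lp_opnorm p A < \<infinity>" if bc: "bounded_coeffs A"
  proof -
    obtain M where M: "M \<ge> 0" "\<And>y x. norm (A y x) \<le> M" using coeffs_bound[OF bc] by blast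
    have "lp_opnorm 1 A \<le> ereal (M * w * w)"
      unfolding w_def by (rule opnorm_le[OF rows cols M(2) M(1)]) simp
    then have "lp_opnorm 1 A < \<infinity>" by (rule le_less_trans) simp
    then show ?thesis by (intro exI[of _ 1]) simp
  qed
  have ii_iii: "bounded_coeffs A" if ex: "\<exists>p::ereal. 1 \<le> p \<and> lp_opnorm p A < \<infinity>"
  proof -
    obtain p :: ereal where p1: "1 \<le> p" and p2: "lp_opnorm p A < \<infinity>" using ex by blast
    have rf: "\<And>y. finite {x. A y x \<noteq> 0}" using rows by blast
    show ?thesis by (rule opnorm_finite_coeffs[OF rf p1 p2])
  qed
  have i_iii: "bounded_coeffs A" if "abs_unif_bounded A"
  proof -
    have "lp_opnorm 1 (abs_mat A) \<le> (SUP p\<in>{1..\<infinity>}. lp_opnorm p (abs_mat A))"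
      by (rule SUP_upper) simp
    then have fin1: "lp_opnorm 1 (abs_mat A) < \<infinity>"
      using that unfolding abs_unif_bounded_def by (rule le_less_trans)
    have rf: "\<And>y. finite {x. abs_mat A y x \<noteq> 0}" using rows' by blast
    have "bounded_coeffs (abs_mat A)"
      by (rule opnorm_finite_coeffs[OF rf _ fin1]) simp
    then show ?thesis by (simp add: bounded_coeffs_def abs_mat_def)
  qed
  show ?thesis using iii_i iii_ii ii_iii i_iii by blast
qed

end
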